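(* Let $\tilde A,\tilde B\in\mathbb{R}^{m\times n}$ and suppose there is $\gamma\in\mathbb{R}_{>0}$ with $\tilde C:=\tilde A+\gamma\tilde B=D+\hat{\mathbf{r}}\hat{\mathbf{c}}^\mathsf{T}$, where $D\in\mathcal{M}_{m\times n}(\mathbb{R})$, $\operatorname{rank}(D)<2$, $\operatorname{rank}(\tilde C)<3$, $\tilde C\notin\mathcal{M}_{m\times n}(\mathbb{R})$, $\hat{\mathbf{r}}\in\mathbb{R}^m$, $\hat{\mathbf{c}}\in\mathbb{R}^n$. Define $(\hat A,\hat B)$ as follows: (1) if $\operatorname{rank}(D)=0$: $\hat A=\tilde A$, $\hat B=\gamma\tilde B$; (2) if $\operatorname{rank}(D)=1$ and $\mathbf{1}_m\in\operatorname{span}(\tilde C)$: take any $\mathbf{x}_1$ with $\tilde C\mathbf{x}_1=\mathbf{1}_m$ and any $\mathbf{y}_1$ with $w_1=\mathbf{y}_1^\mathsf{T}\tilde C\mathbf{x}_1\ne0$, let $\hat{\mathbf{u}}^\mathsf{T}=w_1^{-1}\mathbf{y}_1^\mathsf{T}\tilde C$, and set $\hat A=\tilde A-\mathbf{1}_m\hat{\mathbf{u}}^\mathsf{T}$, $\hat B=\gamma\tilde B$; (3) if $\operatorname{rank}(D)=1$ and $\mathbf{1}_n\in\operatorname{span}(\tilde C^\mathsf{T})$: take any $\mathbf{y}_1$ with $\mathbf{y}_1^\mathsf{T}\tilde C=\mathbf{1}_n^\mathsf{T}$ and any $\mathbf{x}_1$ with $w_1=\mathbf{y}_1^\mathsf{T}\tilde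 C\mathbf{x}_1\ne0$, let $\hat{\mathbf{v}}=w_1^{-1}\tilde C\mathbf{x}_1$, and set $\hat A=\tilde A$, $\hat B=\gamma\tilde B-\hat{\mathbf{v}}\mathbf{1}_n^\mathsf{T}$. In each case the required vectors exist, $\operatorname{rank}(\hat A+\hat B)=1$, and $(m,n,\tilde A,\tilde B)$ is strategically equivalent to the rank-1 game $(m,n,\hat A,\hat B)$.
   Context: $\mathbf{1}_k$ is the all-ones vector of length $k$; $\operatorname{span}(C)$ is the column space of $C$. $\mathcal{M}_{m\times n}(\mathbb{R})=\{M\in\mathbb{R}^{m\times n}: M=\mathbf{1}_m\mathbf{u}^\mathsf{T}+\mathbf{v}\mathbf{1}_n^\mathsf{T}\text{ for some }\mathbf{u}\in\mathbb{R}^n,\mathbf{v}\in\mathbb{R}^m\}$. A bimatrix game $(m,n,A,B)$ has payoff matrices $A,B$; two games are strategically equivalent iff they have the same set of (mixed) Nash equilibria; a game is rank-1 if $\operatorname{rank}(A+B)=1$. *)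

theory Defs
  imports "HOL-Analysis.Analysis"
begin

definition ones :: "real ^ 'k" where
  "ones = (\<chi> i. 1)"

definition outer :: "real ^ 'm \<Rightarrow> real ^ 'n \<Rightarrow> real ^ 'n ^ 'm" where
  "outer u v = (\<chi> i j. u $ i * v $ j)"

definition Mset :: "(real ^ 'n ^ 'm) set" where
  "Mset = {M. \<exists>(u::real^'n) (v::real^'m). M = outer ones u + outer v ones}"

definition mixed_strategies :: "(real ^ 'k) set" where
  "mixed_strategies = {x. (\<forall>i. 0 \<le> x $ i) \<and> (\<Sum>i\<in>UNIV. x $ i) = 1}"

definition nash_equilibria :: "real ^ 'n ^ 'm \<Rightarrow> real ^ 'n ^ 'm \<Rightarrow> ((real ^ 'm) \<times> (real ^ 'n)) set" where
  "nash_equilibria A B = {(x, y). x \<in> mixed_strategies \<and> y \<in> mixed_strategies \<and>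
      (\<forall>x'\<in>mixed_strategies. x' \<bullet> (A *v y) \<le> x \<bullet> (A *v y)) \<and>
      (\<forall>y'\<in>mixed_strategies. x \<bullet> (B *v y') \<le> x \<bullet> (B *v y))}"

definition strategically_equivalent ::
  "real ^ 'n ^ 'm \<Rightarrow> real ^ 'n ^ 'm \<Rightarrow> real ^ 'n ^ 'm \<Rightarrow> real ^ 'n ^ 'm \<Rightarrow> bool" where
  "strategically_equivalent A B A' B' \<longleftrightarrow> nash_equilibria A B = nash_equilibria A' B'"

definition rank1_game :: "real ^ 'n ^ 'm \<Rightarrow> real ^ 'n ^ 'm \<Rightarrow> bool" where
  "rank1_game A B \<longleftrightarrow> rank (A + B) = 1"

end

theory Submission
  imports Defs
begin

lemma span_columns_range:
  fixes A :: "real^'n^'m"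
  assumes "z \<in> span (columns A)"
  shows "\<exists>x. A *v x = z"
proof -
  have sub: "subspace (range ((*v) A))"
    by (simp add: subspace_UNIV linear_subspace_image matrix_vector_mul_linear)
  have "columns A \<subseteq> range ((*v) A)" by (auto simp: columns_image_basis)
  hence "span (columns A) \<subseteq> range ((*v) A)" using sub by (simp add: span_minimal)
  thus ?thesis using assms by auto
qed

lemma outer_ones_mult:
  "outer ones u *v y = (u \<bullet> y) *\<^sub>R (ones :: real^'k)"
  by (simp add: outer_def ones_def matrix_vector_mult_def inner_vec_def vec_eq_iff sum_distrib_left)

lemma outer_ones_mult2:
  "outer v ones *v (y::real^'k) = (\<Sum>i\<in>UNIV. y $ i) *\<^sub>R v"
  by (simp add: outer_def ones_def matrix_vector_mult_def vec_eq_iff sum_distrib_left mult.commute)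

lemma mixed_ones: "x \<in> mixed_strategies \<Longrightarrow> x \<bullet> (c *\<^sub>R ones) = c"
  by (simp add: mixed_strategies_def ones_def inner_vec_def sum_distrib_right[symmetric])

lemma mixed_ones1: "x \<in> mixed_strategies \<Longrightarrow> x \<bullet> ones = 1"
  using mixed_ones[of x 1] by simp

lemma mixed_sum: "x \<in> mixed_strategies \<Longrightarrow> (\<Sum>i\<in>UNIV. x $ i) = 1"
  by (simp add: mixed_strategies_def)

lemma scaleR_mv: "(c *\<^sub>R (B::real^'n^'m)) *v y = c *\<^sub>R (B *v y)"
  by (simp add: matrix_vector_mult_def vec_eq_iff sum_distrib_left mult.assoc)

lemma NE_invariance:
  fixes A B :: "real^'n^'m"
  assumes g: "\<gamma> > 0"
  shows "nash_equilibria A B = nash_equilibria (A - outer ones u) (\<gamma> *\<^sub>R B - outer v ones)"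
proof -
  have e1: "x' \<bullet> ((A - outer ones u) *v y) = x' \<bullet> (A *v y) - u \<bullet> y"
    if "x' \<in> mixed_strategies" for x' y
    using that by (simp add: matrix_vector_mult_diff_rdistrib outer_ones_mult inner_diff_right mixed_ones mixed_ones1)
  have e2: "x \<bullet> ((\<gamma> *\<^sub>R B - outer v ones) *v y') = \<gamma> * (x \<bullet> (B *v y')) - x \<bullet> v"
    if "y' \<in> mixed_strategies" for x y'
    using that by (simp add: matrix_vector_mult_diff_rdistrib outer_ones_mult2 inner_diff_right mixed_sum
        scaleR_mv)
  show ?thesis
    unfolding nash_equilibria_def
    using g by (auto simp: e1 e2)
qed

lemma outer_zero1: "outer 0 v = 0" and outer_zero2: "outer u 0 = 0"
  by (simp_all add: outer_def vec_eq_iff)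

lemma zero_in_M: "0 \<in> Mset"
  unfolding Mset_def by (auto intro!: exI[of _ 0] simp: outer_zero1 outer_zero2)

lemma rank_proj:
  fixes C :: "real^'n^'m"
  assumes Cx: "C *v x1 = ones" and w: "(y1 v* C) \<bullet> x1 \<noteq> 0"
    and r3: "rank C < 3" and nM: "C \<notin> Mset"
  shows "rank (C - outer ones ((1 / ((y1 v* C) \<bullet> x1)) *\<^sub>R (y1 v* C))) = 1"
proof -
  define w where "w = (y1 v* C) \<bullet> x1"
  define u where "u = (1 / w) *\<^sub>R (y1 v* C)"
  define N where "N = C - outer ones u"
  have wne: "w \<noteq> 0" using w by (simp add: w_def)
  have Nz: "N *v z = C *v z - (u \<bullet> z) *\<^sub>R ones" for z
    by (simp add: N_def matrix_vector_mult_diff_rdistrib outer_ones_mult)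
  have yo: "y1 \<bullet> ones = w" using Cx by (simp add: w_def dot_lmul_matrix)
  have yC: "y1 \<bullet> (C *v z) = w * (u \<bullet> z)" for z
    using wne by (simp add: u_def dot_lmul_matrix[symmetric])
  have yN: "y1 \<bullet> (N *v z) = 0" for z
    by (simp add: Nz inner_diff_right yC yo)
  have notin: "ones \<notin> range ((*v) N)"
    using yN yo wne by (metis rangeE)
  have sub: "insert ones (range ((*v) N)) \<subseteq> range ((*v) C)"
  proof -
    have "N *v z = C *v (z - (u \<bullet> z) *\<^sub>R x1)" for z
      by (simp add: Nz matrix_vector_mult_diff_distrib Cx matrix_vector_mult_scaleR)
    thus ?thesis using Cx by (auto intro: range_eqI[of _ _ x1] range_eqI)
  qed
  have subN: "subspace (range ((*v) N))"
    by (simp add: subspace_UNIV linear_subspace_image matrix_vector_mul_linear)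
  have "dim (insert ones (range ((*v) N))) = dim (range ((*v) N)) + 1"
    using notin subN by (simp add: dim_insert span_eq_iff[THEN iffD2, OF subN])
  moreover have "dim (insert ones (range ((*v) N))) \<le> rank C"
    using sub by (simp add: rank_dim_range dim_subset)
  ultimately have le: "rank N \<le> 1" using r3 by (simp add: rank_dim_range)
  have "N \<noteq> 0"
  proof
    assume "N = 0"
    hence "C = outer ones u + outer 0 ones" by (simp add: N_def outer_zero1)
    hence "C \<in> Mset" unfolding Mset_def by blast
    thus False using nM by simp
  qed
  hence "rank N \<noteq> 0" by (simp add: rank_eq_0)
  with le have "rank N = 1" by simp
  thus ?thesis by (simp add: N_def u_def w_def)
qed

lemma transpose_diff': "transpose (A - B) = transpose A - transpose (B::real^'n^'m)"
  by (simp add: transpose_def vec_eq_iff)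

lemma transpose_add': "transpose (A + B) = transpose A + transpose (B::real^'n^'m)"
  by (simp add: transpose_def vec_eq_iff)

lemma transpose_outer: "transpose (outer a b) = outer b a"
  by (simp add: transpose_def outer_def vec_eq_iff mult.commute)

lemma transpose_notM:
  assumes "(C::real^'n^'m) \<notin> Mset" shows "transpose C \<notin> Mset"
proof
  assume "transpose C \<in> Mset"
  then obtain u v where "transpose C = outer ones u + outer v ones" unfolding Mset_def by blast
  hence "C = outer ones v + outer u ones"
    by (metis transpose_transpose transpose_add' transpose_outer add.commute)
  thus False using assms unfolding Mset_def by blast
qed

lemma rank_outer1:
  assumes "outer r c \<noteq> (0::real^'n^'m)"
  shows "rank (outer r c) = 1"
proof -
  have "range ((*v) (outer r c)) \<subseteq> span {r}"
  proof
    fix z assume "z \<in> range ((*v) (outer r c))"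
    then obtain y where "z = outer r c *v y" by auto
    hence "z = (c \<bullet> y) *\<^sub>R r"
      by (simp add: outer_def matrix_vector_mult_def vec_eq_iff inner_vec_def sum_distrib_left mult.commute mult.left_commute)
    thus "z \<in> span {r}" by (simp add: span_mul span_base)
  qed
  hence "dim (range ((*v) (outer r c))) \<le> dim (span {r})" by (rule dim_subset)
  hence "rank (outer r c) \<le> dim (span {r})" by (simp only: rank_dim_range)
  also have "\<dots> \<le> 1" by (simp add: dim_insert)
  finally show ?thesis using assms rank_eq_0 by (metis le_antisym less_one not_le)
qed

lemma ones_ne0: "(ones::real^'k) \<bullet> ones \<noteq> 0"
  by (simp add: ones_def inner_vec_def)

theorem mainTheorem12:
  fixes At Bt D :: "real ^ 'n ^ 'm" and \<gamma> :: real
    and r :: "real ^ 'm" and c :: "real ^ 'n"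
  assumes gpos: "\<gamma> > 0"
    and Cdecomp: "At + \<gamma> *\<^sub>R Bt = D + outer r c"
    and DM: "D \<in> Mset"
    and rankD: "rank D < 2"
    and rankC: "rank (At + \<gamma> *\<^sub>R Bt) < 3"
    and CnotM: "At + \<gamma> *\<^sub>R Bt \<notin> Mset"
  shows
    "(rank D = 0 \<longrightarrow>
        rank (At + \<gamma> *\<^sub>R Bt) = 1 \<and> rank1_game At (\<gamma> *\<^sub>R Bt) \<and>
        strategically_equivalent At Bt At (\<gamma> *\<^sub>R Bt))
   \<and> (rank D = 1 \<and> ones \<in> span (columns (At + \<gamma> *\<^sub>R Bt)) \<longrightarrow>
        (\<exists>x1 y1. (At + \<gamma> *\<^sub>R Bt) *v x1 = ones \<and> (y1 v* (At + \<gamma> *\<^sub>R Bt)) \<bullet> x1 \<noteq> 0) \<and>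
        (\<forall>x1 y1. (At + \<gamma> *\<^sub>R Bt) *v x1 = ones \<longrightarrow> (y1 v* (At + \<gamma> *\<^sub>R Bt)) \<bullet> x1 \<noteq> 0 \<longrightarrow>
          (let w1 = (y1 v* (At + \<gamma> *\<^sub>R Bt)) \<bullet> x1;
               u = (1 / w1) *\<^sub>R (y1 v* (At + \<gamma> *\<^sub>R Bt));
               Ah = At - outer ones u; Bh = \<gamma> *\<^sub>R Bt
           in rank (Ah + Bh) = 1 \<and> rank1_game Ah Bh \<and> strategically_equivalent At Bt Ah Bh)))
   \<and> (rank D = 1 \<and> ones \<in> span (columns (transpose (At + \<gamma> *\<^sub>R Bt))) \<longrightarrow>
        (\<exists>y1 x1. y1 v* (At + \<gamma> *\<^sub>R Bt) = ones \<and> (y1 v* (At + \<gamma> *\<^sub>R Bt)) \<bullet> x1 \<noteq> 0) \<and>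
        (\<forall>y1 x1. y1 v* (At + \<gamma> *\<^sub>R Bt) = ones \<longrightarrow> (y1 v* (At + \<gamma> *\<^sub>R Bt)) \<bullet> x1 \<noteq> 0 \<longrightarrow>
          (let w1 = (y1 v* (At + \<gamma> *\<^sub>R Bt)) \<bullet> x1;
               v = (1 / w1) *\<^sub>R ((At + \<gamma> *\<^sub>R Bt) *v x1);
               Ah = At; Bh = \<gamma> *\<^sub>R Bt - outer v ones
           in rank (Ah + Bh) = 1 \<and> rank1_game Ah Bh \<and> strategically_equivalent At Bt Ah Bh)))"
proof -
  define C where "C = At + \<gamma> *\<^sub>R Bt"
  have NE1: "nash_equilibria At Bt = nash_equilibria (At - outer ones u) (\<gamma> *\<^sub>R Bt)" for u
    using NE_invariance[OF gpos, of At Bt u 0] by (simp add: outer_zero1)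
  have NE2: "nash_equilibria At Bt = nash_equilibria At (\<gamma> *\<^sub>R Bt - outer v ones)" for v
    using NE_invariance[OF gpos, of At Bt 0 v] by (simp add: outer_zero2)
  have P1: "rank D = 0 \<longrightarrow>
        rank C = 1 \<and> rank1_game At (\<gamma> *\<^sub>R Bt) \<and>
        strategically_equivalent At Bt At (\<gamma> *\<^sub>R Bt)"
  proof
    assume "rank D = 0"
    hence "D = 0" by (simp add: rank_eq_0)
    hence Cr: "C = outer r c" using Cdecomp by (simp add: C_def)
    have "C \<noteq> 0" using CnotM zero_in_M by (auto simp: C_def)
    hence "rank C = 1" using Cr rank_outer1 by metis
    thus "rank C = 1 \<and> rank1_game At (\<gamma> *\<^sub>R Bt) \<and>
        strategically_equivalent At Bt At (\<gamma> *\<^sub>R Bt)"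
      using NE1[of 0] by (simp add: rank1_game_def strategically_equivalent_def C_def outer_zero2)
  qed
  have P2: "rank D = 1 \<and> ones \<in> span (columns C) \<longrightarrow>
        (\<exists>x1 y1. C *v x1 = ones \<and> (y1 v* C) \<bullet> x1 \<noteq> 0) \<and>
        (\<forall>x1 y1. C *v x1 = ones \<longrightarrow> (y1 v* C) \<bullet> x1 \<noteq> 0 \<longrightarrow>
          (let w1 = (y1 v* C) \<bullet> x1;
               u = (1 / w1) *\<^sub>R (y1 v* C);
               Ah = At - outer ones u; Bh = \<gamma> *\<^sub>R Bt
           in rank (Ah + Bh) = 1 \<and> rank1_game Ah Bh \<and> strategically_equivalent At Bt Ah Bh))"
  proof (intro impI conjI allI)
    assume "rank D = 1 \<and> ones \<in> span (columns C)"
    then obtain x1 where "C *v x1 = ones" using span_columns_range by blast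
    thus "\<exists>x1 y1. C *v x1 = ones \<and> (y1 v* C) \<bullet> x1 \<noteq> 0"
      using ones_ne0 by (metis dot_lmul_matrix)
  next
    fix x1 y1
    assume Cx: "C *v x1 = ones" and w: "(y1 v* C) \<bullet> x1 \<noteq> 0"
    have r: "rank (C - outer ones ((1 / ((y1 v* C) \<bullet> x1)) *\<^sub>R (y1 v* C))) = 1"
      by (rule rank_proj[OF Cx w]) (use rankC CnotM C_def in auto)
    have eq: "At - outer ones u + \<gamma> *\<^sub>R Bt = C - outer ones u" for u
      by (simp add: C_def algebra_simps)
    show "let w1 = (y1 v* C) \<bullet> x1;
               u = (1 / w1) *\<^sub>R (y1 v* C);
               Ah = At - outer ones u; Bh = \<gamma> *\<^sub>R Bt
           in rank (Ah + Bh) = 1 \<and> rank1_game Ah Bh \<and> strategically_equivalent At Bt Ah Bh"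
      using r NE1 by (simp add: Let_def eq rank1_game_def strategically_equivalent_def)
  qed
  have P3: "rank D = 1 \<and> ones \<in> span (columns (transpose C)) \<longrightarrow>
        (\<exists>y1 x1. y1 v* C = ones \<and> (y1 v* C) \<bullet> x1 \<noteq> 0) \<and>
        (\<forall>y1 x1. y1 v* C = ones \<longrightarrow> (y1 v* C) \<bullet> x1 \<noteq> 0 \<longrightarrow>
          (let w1 = (y1 v* C) \<bullet> x1;
               v = (1 / w1) *\<^sub>R (C *v x1);
               Ah = At; Bh = \<gamma> *\<^sub>R Bt - outer v ones
           in rank (Ah + Bh) = 1 \<and> rank1_game Ah Bh \<and> strategically_equivalent At Bt Ah Bh))"
  proof (intro impI conjI allI)
    assume "rank D = 1 \<and> ones \<in> span (columns (transpose C))"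
    then obtain y1 where "transpose C *v y1 = ones" using span_columns_range by blast
    hence "y1 v* C = ones" by simp
    thus "\<exists>y1 x1. y1 v* C = ones \<and> (y1 v* C) \<bullet> x1 \<noteq> 0"
      using ones_ne0 by metis
  next
    fix y1 x1
    assume yC: "y1 v* C = ones" and w: "(y1 v* C) \<bullet> x1 \<noteq> 0"
    have Cy: "transpose C *v y1 = ones" using yC by simp
    have weq: "(x1 v* transpose C) \<bullet> y1 = (y1 v* C) \<bullet> x1"
      by (metis vector_transpose_matrix dot_lmul_matrix inner_commute)
    have w': "(x1 v* transpose C) \<bullet> y1 \<noteq> 0" using w weq by simp
    have rT: "rank (transpose C - outer ones ((1 / ((x1 v* transpose C) \<bullet> y1)) *\<^sub>R (x1 v* transpose C))) = 1"
      by (rule rank_proj[OF Cy w']) (use rankC CnotM in \<open>auto simp: C_def rank_transpose dest: transpose_notM\<close>)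
    have r: "rank (C - outer ((1 / ((y1 v* C) \<bullet> x1)) *\<^sub>R (C *v x1)) ones) = 1"
      using rT unfolding weq
      by (metis (no_types, lifting) rank_transpose transpose_diff' transpose_outer transpose_transpose vector_transpose_matrix)
    have eq: "At + (\<gamma> *\<^sub>R Bt - outer v ones) = C - outer v ones" for v
      by (simp add: C_def algebra_simps)
    show "let w1 = (y1 v* C) \<bullet> x1;
               v = (1 / w1) *\<^sub>R (C *v x1);
               Ah = At; Bh = \<gamma> *\<^sub>R Bt - outer v ones
           in rank (Ah + Bh) = 1 \<and> rank1_game Ah Bh \<and> strategically_equivalent At Bt Ah Bh"
      using r NE2 by (simp add: Let_def eq rank1_game_def strategically_equivalent_def)
  qed
  show ?thesis using P1 P2 P3 by (simp add: C_def rank1_game_def)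
qed

end
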